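(* Let $(\alpha,\beta)\in\Delta_K$, $(\alpha_n,\beta_n)=T^n(\alpha,\beta)$, $\varepsilon_n=\varepsilon(\alpha_n,\beta_n)$, $n\ge0$, and let $\varphi_n:\mathbb{R}^3\to\mathbb{R}^3$, $\varphi_n(\bar{\bar x})=L_{\varepsilon_n}^{-1}\bar{\bar x}$. Let $c_n=\frac{1}{1-\beta_n}$ if $\varepsilon_n\in\{(1,2),(0,2)\}$, $c_n=\frac{1}{1-\alpha_n}$ if $\varepsilon_n\in\{(2,1),(0,1)\}$, and $c_n=\frac{1}{\alpha_n+\beta_n}$ if $\varepsilon_n\in\{(1,0),(2,0)\}$. Then for all $\bar{\bar x}\in\mathbb{R}^3$, \[ \langle\varphi_n\bar{\bar x},\bar{\bar\nu}(\alpha_n,\beta_n)\rangle=\frac{1}{c_n}\langle\bar{\bar x},\bar{\bar\nu}(\alpha_{n+1},\beta_{n+1})\rangle . \]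
   Context: Let $K\subset\mathbb{R}$ be a real cubic number field, $N=N_{K/\mathbb{Q}}$ its norm. Fix $r=p/q$ with $p,q$ positive coprime integers and $3\nmid p$. Let $\Delta_K=\{(\alpha,\beta)\in K^2:\ 1,\alpha,\beta \text{ linearly independent over }\mathbb{Q},\ \alpha,\beta>0,\ \alpha+\beta<1\}$ and $Ind=\{(i,j): i,j\in\{0,1,2\},\ i\neq j\}$. Let $\Delta=\{(x,y)\in\mathbb{R}^2: x,y\ge 0,\ x+y\le 1\}$ and $\triangle(1,2)=\{(x,y)\in\Delta: x\ge y\}$, $\triangle(2,1)=\{x\le y\}$, $\triangle(0,1)=\{2x+y-1\le 0\}$, $\triangle(1,0)=\{2x+y-1\ge 0\}$, $\triangle(0,2)=\{x+2y-1\le0\}$, $\triangle(2,0)=\{x+2y-1\ge 0\}$ (all subsets of $\Delta$). Maps $T_{(i,j)}:\triangle(i,j)\to\Delta$: $T_{(1,2)}(x,y)=(\frac{x-y}{1-y},\frac{y}{1-y})$, $T_{(2,1)}(x,y)=(\frac{x}{1-x},\frac{y-x}{1-x})$, $T_{(0,1)}(x,y)=(\frac{x}{1-x},\frac{y}{1-x})$, $T_{(1,0)}(x,y)=(\frac{2x+y-1}{x+y},\frac{y}{x+y})$, $T_{(0,2)}(x,y)=(\frac{x}{1-y},\frac{y}{1-y})$, $T_{(2,0)}(x,y)=(\frac{x}{x+y},\frac{x+2y-1}{x+y})$. For $(\alpha,\beta)\in\Delta_K$ put $\gamma=1-\alpha-\beta$ and $v_{\{1,2\}}=\frac{\alpha^r\beta^r}{|N(\alpha)N(\beta)|}$,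 $v_{\{0,1\}}=\frac{\alpha^r\gamma^r}{|N(\alpha)N(\gamma)|}$, $v_{\{0,2\}}=\frac{\beta^r\gamma^r}{|N(\beta)N(\gamma)|}$; the maximum is attained at a unique pair $\{i_0,j_0\}$. $\varepsilon(\alpha,\beta)$ is the ordered pair $(i,j)\in Ind$ with $\{i,j\}=\{i_0,j_0\}$ and $(\alpha,\beta)\in\triangle(i,j)$, and $T(\alpha,\beta)=T_{\varepsilon(\alpha,\beta)}(\alpha,\beta)$ (a map $\Delta_K\to\Delta_K$). For $(i,j)\in Ind$, $M_{(i,j)}=(m_{k\ell})_{0\le k,\ell\le2}$ with $m_{k\ell}=1$ if $k=\ell$ or $(k,\ell)=(i,j)$, and $0$ otherwise; and $L_{(i,j)}:=M_{(j,i)}$. For $(\alpha,\beta)\in\Delta_K$, $\bar{\bar\nu}(\alpha,\beta)={}^t(1-\alpha-\beta,\alpha,\beta)$; $\langle\cdot,\cdot\rangle$ is the standard inner product on $\mathbb{R}^3$. *)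

theory Defs
  imports "HOL-Analysis.Analysis"
begin

definition is_subfield_real :: "real set \<Rightarrow> bool" where
  "is_subfield_real K \<longleftrightarrow> 0 \<in> K \<and> 1 \<in> K \<and>
     (\<forall>x\<in>K. \<forall>y\<in>K. x + y \<in> K \<and> x * y \<in> K) \<and>
     (\<forall>x\<in>K. - x \<in> K \<and> inverse x \<in> K)"

definition is_rat_basis3 :: "real set \<Rightarrow> (nat \<Rightarrow> real) \<Rightarrow> bool" where
  "is_rat_basis3 K b \<longleftrightarrow> (\<forall>k<3. b k \<in> K) \<and>
     (\<forall>x\<in>K. \<exists>!c::nat \<Rightarrow> rat. (\<forall>k\<ge>3. c k = 0) \<and> x = (\<Sum>k<3. of_rat (c k) * b k))"

definition real_cubic_field :: "real set \<Rightarrow> bool" where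
  "real_cubic_field K \<longleftrightarrow> is_subfield_real K \<and> (\<exists>b. is_rat_basis3 K b)"

definition cf_basis :: "real set \<Rightarrow> nat \<Rightarrow> real" where
  "cf_basis K = (SOME b. is_rat_basis3 K b)"

definition cf_coord :: "real set \<Rightarrow> real \<Rightarrow> nat \<Rightarrow> rat" where
  "cf_coord K x = (THE c. (\<forall>k\<ge>3. c k = 0) \<and> x = (\<Sum>k<3. of_rat (c k) * cf_basis K k))"

definition det3 :: "(nat \<Rightarrow> nat \<Rightarrow> 'a::comm_ring_1) \<Rightarrow> 'a" where
  "det3 m = m 0 0 * (m 1 1 * m 2 2 - m 1 2 * m 2 1)
          - m 0 1 * (m 1 0 * m 2 2 - m 1 2 * m 2 0)
          + m 0 2 * (m 1 0 * m 2 1 - m 1 1 * m 2 0)"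

definition field_norm :: "real set \<Rightarrow> real \<Rightarrow> rat" where
  "field_norm K a = det3 (\<lambda>k l. cf_coord K (a * cf_basis K l) k)"

definition Delta_K :: "real set \<Rightarrow> (real \<times> real) set" where
  "Delta_K K = {(a, b). a \<in> K \<and> b \<in> K \<and>
     (\<forall>q0 q1 q2 :: rat. of_rat q0 + of_rat q1 * a + of_rat q2 * b = 0 \<longrightarrow>
        q0 = 0 \<and> q1 = 0 \<and> q2 = 0) \<and>
     a > 0 \<and> b > 0 \<and> a + b < 1}"

definition vfun :: "real set \<Rightarrow> real \<Rightarrow> real \<Rightarrow> real \<Rightarrow> real" where
  "vfun K r s t = (s powr r * t powr r) / \<bar>of_rat (field_norm K s) * of_rat (field_norm K t)\<bar>"

text \<open>eps K r (a,b): the ordered pair (i,j) with {i,j} the maximising pair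
  (unique by the paper) and (a,b) in triangle(i,j).\<close>
definition eps :: "real set \<Rightarrow> real \<Rightarrow> real \<times> real \<Rightarrow> nat \<times> nat" where
  "eps K r ab = (let a = fst ab; b = snd ab; g = 1 - a - b;
       v12 = vfun K r a b; v01 = vfun K r a g; v02 = vfun K r b g in
     if v12 \<ge> v01 \<and> v12 \<ge> v02 then (if a \<ge> b then (1, 2) else (2, 1))
     else if v01 \<ge> v02 then (if 2 * a + b - 1 \<le> 0 then (0, 1) else (1, 0))
     else (if a + 2 * b - 1 \<le> 0 then (0, 2) else (2, 0)))"

fun Tij :: "nat \<times> nat \<Rightarrow> real \<times> real \<Rightarrow> real \<times> real" where
  "Tij (i, j) (x, y) =
    (if (i, j) = (1, 2) then ((x - y) / (1 - y), y / (1 - y))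
     else if (i, j) = (2, 1) then (x / (1 - x), (y - x) / (1 - x))
     else if (i, j) = (0, 1) then (x / (1 - x), y / (1 - x))
     else if (i, j) = (1, 0) then ((2 * x + y - 1) / (x + y), y / (x + y))
     else if (i, j) = (0, 2) then (x / (1 - y), y / (1 - y))
     else (x / (x + y), (x + 2 * y - 1) / (x + y)))"

definition Tmap :: "real set \<Rightarrow> real \<Rightarrow> real \<times> real \<Rightarrow> real \<times> real" where
  "Tmap K r ab = Tij (eps K r ab) ab"

definition Mmat :: "nat \<times> nat \<Rightarrow> real^3^3" where
  "Mmat ij = (\<chi> k l. if k = l \<or> (k = of_nat (fst ij) \<and> l = of_nat (snd ij)) then 1 else 0)"

definition Lmat :: "nat \<times> nat \<Rightarrow> real^3^3" where
  "Lmat ij = Mmat (snd ij, fst ij)"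

definition nuvec :: "real \<times> real \<Rightarrow> real^3" where
  "nuvec ab = (\<chi> k. if k = 0 then 1 - fst ab - snd ab else if k = 1 then fst ab else snd ab)"

end

theory Submission
  imports Defs
begin

definition Ninv :: "nat \<times> nat \<Rightarrow> real^3^3" where
  "Ninv ij = (\<chi> k l. if k = l then 1 else if k = of_nat (fst ij) \<and> l = of_nat (snd ij) then -1 else 0)"

lemma inv_unique3:
  fixes A N :: "real^3^3"
  assumes "A ** N = mat 1" "N ** A = mat 1"
  shows "matrix_inv A = N"
proof -
  have ex: "\<exists>A'. A ** A' = mat 1 \<and> A' ** A = mat 1" using assms by blast
  define B where "B = matrix_inv A"
  have B: "A ** B = mat 1 \<and> B ** A = mat 1"
    unfolding B_def matrix_inv_def by (rule someI_ex[OF ex])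
  have "B = B ** (A ** N)" using assms by simp
  also have "\<dots> = (B ** A) ** N" by (simp add: matrix_mul_assoc)
  also have "\<dots> = N" using B by simp
  finally show ?thesis unfolding B_def .
qed

definition indep :: "real \<Rightarrow> real \<Rightarrow> bool" where
  "indep a b \<longleftrightarrow> (\<forall>q0 q1 q2 :: rat. of_rat q0 + of_rat q1 * a + of_rat q2 * b = 0 \<longrightarrow>
        q0 = 0 \<and> q1 = 0 \<and> q2 = 0)"

definition good :: "real \<times> real \<Rightarrow> bool" where
  "good ab \<longleftrightarrow> indep (fst ab) (snd ab) \<and> fst ab > 0 \<and> snd ab > 0 \<and> fst ab + snd ab < 1"

lemma indep_use: "indep a b \<Longrightarrow> of_rat c0 + of_rat c1 * a + of_rat c2 * b = (0::real) \<Longrightarrow> c0 = 0 \<and> c1 = 0 \<and> c2 = 0"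
  unfolding indep_def by blast

lemma indep_neq:
  assumes "indep a b" "(c0,c1,c2) \<noteq> (0,0,0)"
  shows "of_rat c0 + of_rat c1 * a + of_rat c2 * b \<noteq> (0::real)"
  using indep_use[OF assms(1)] assms(2) by blast

lemma indep_transform:
  assumes i: "indep a b" and d: "(d::real) \<noteq> 0"
  and lin: "\<And>q0 q1 q2. of_rat q0 * d + of_rat q1 * u + of_rat q2 * v
       = of_rat (fa q0 q1 q2) + of_rat (fb q0 q1 q2)*a + of_rat (fc q0 q1 q2)*b"
  and inj: "\<And>q0 q1 q2. fa q0 q1 q2 = 0 \<Longrightarrow> fb q0 q1 q2 = 0 \<Longrightarrow> fc q0 q1 q2 = 0 \<Longrightarrow> q0=0 \<and> q1=0 \<and> q2=0"
  shows "indep (u/d) (v/d)"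
  unfolding indep_def
proof (intro allI impI)
  fix q0 q1 q2 :: rat
  assume h: "of_rat q0 + of_rat q1 * (u/d) + of_rat q2 * (v/d) = 0"
  have "of_rat (fa q0 q1 q2) + of_rat (fb q0 q1 q2)*a + of_rat (fc q0 q1 q2)*b = 0"
  proof -
    have "(of_rat q0 + of_rat q1 * (u/d) + of_rat q2 * (v/d)) * d = 0" using h by simp
    moreover have "(of_rat q0 + of_rat q1 * (u/d) + of_rat q2 * (v/d)) * d = of_rat q0 * d + of_rat q1 * u + of_rat q2 * v"
      using d by (simp add: distrib_right)
    ultimately show ?thesis using lin[of q0 q1 q2] by metis
  qed
  from indep_use[OF i this] show "q0 = 0 \<and> q1 = 0 \<and> q2 = 0" using inj by blast
qed

lemmas rs = of_rat_add of_rat_diff of_rat_mult of_rat_minus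

lemma step12:
  assumes "good (a,b)" "a \<ge> b"
  shows "good ((a-b)/(1-b), b/(1-b))"
proof -
  have i: "indep a b" and p: "a > 0" "b > 0" "a + b < 1" using assms(1) by (auto simp: good_def)
  have "a \<noteq> b" using indep_neq[OF i, of 0 1 "-1"] by auto
  hence ab: "a > b" using assms(2) by simp
  have d: "1 - b > 0" using p by simp
  have "indep ((a-b)/(1-b)) (b/(1-b))"
    by (rule indep_transform[OF i, where fa="\<lambda>q0 q1 q2. q0" and fb="\<lambda>q0 q1 q2. q1" and fc="\<lambda>q0 q1 q2. q2-q1-q0"])
       (use d in \<open>auto simp: algebra_simps rs\<close>)
  moreover have "(a-b)/(1-b) > 0" "b/(1-b) > 0"
    using ab d p by (auto simp: field_simps)
  moreover have "(a-b)/(1-b) + b/(1-b) < 1"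
    by (subst add_divide_distrib[symmetric]) (use ab d p in \<open>simp add: divide_less_eq\<close>)
  ultimately show ?thesis by (simp add: good_def)
qed

lemma step21:
  assumes "good (a,b)" "\<not> a \<ge> b"
  shows "good (a/(1-a), (b-a)/(1-a))"
proof -
  have i: "indep a b" and p: "a > 0" "b > 0" "a + b < 1" using assms(1) by (auto simp: good_def)
  have ab: "a < b" using assms(2) by simp
  have d: "1 - a > 0" using p by simp
  have "indep (a/(1-a)) ((b-a)/(1-a))"
    by (rule indep_transform[OF i, where fa="\<lambda>q0 q1 q2. q0" and fb="\<lambda>q0 q1 q2. q1-q0-q2" and fc="\<lambda>q0 q1 q2. q2"])
       (use d in \<open>auto simp: algebra_simps rs\<close>)
  moreover have "a/(1-a) > 0" "(b-a)/(1-a) > 0"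
    using ab d p by (auto simp: field_simps)
  moreover have "a/(1-a) + (b-a)/(1-a) < 1"
    by (subst add_divide_distrib[symmetric]) (use ab d p in \<open>simp add: divide_less_eq\<close>)
  ultimately show ?thesis by (simp add: good_def)
qed

lemma step01:
  assumes "good (a,b)" "2*a+b-1 \<le> 0"
  shows "good (a/(1-a), b/(1-a))"
proof -
  have i: "indep a b" and p: "a > 0" "b > 0" "a + b < 1" using assms(1) by (auto simp: good_def)
  have "2*a+b-1 \<noteq> 0" using indep_neq[OF i, of "-1" 2 1] by (auto simp: algebra_simps)
  hence ab: "2*a+b < 1" using assms(2) by simp
  have d: "1 - a > 0" using p by simp
  have "indep (a/(1-a)) (b/(1-a))"
    by (rule indep_transform[OF i, where fa="\<lambda>q0 q1 q2. q0" and fb="\<lambda>q0 q1 q2. q1-q0" and fc="\<lambda>q0 q1 q2. q2"])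
       (use d in \<open>auto simp: algebra_simps rs\<close>)
  moreover have "a/(1-a) > 0" "b/(1-a) > 0"
    using ab d p by (auto simp: field_simps)
  moreover have "a/(1-a) + b/(1-a) < 1"
    by (subst add_divide_distrib[symmetric]) (use ab d p in \<open>simp add: divide_less_eq\<close>)
  ultimately show ?thesis by (simp add: good_def)
qed

lemma step10:
  assumes "good (a,b)" "\<not> 2*a+b-1 \<le> 0"
  shows "good ((2*a+b-1)/(a+b), b/(a+b))"
proof -
  have i: "indep a b" and p: "a > 0" "b > 0" "a + b < 1" using assms(1) by (auto simp: good_def)
  have ab: "2*a+b > 1" using assms(2) by simp
  have d: "a + b > 0" using p by simp
  have "indep ((2*a+b-1)/(a+b)) (b/(a+b))"
    by (rule indep_transform[OF i, where fa="\<lambda>q0 q1 q2. -q1" and fb="\<lambda>q0 q1 q2. q0+2*q1" and fc="\<lambda>q0 q1 q2. q0+q1+q2"])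
       (use d in \<open>auto simp: algebra_simps rs\<close>)
  moreover have "(2*a+b-1)/(a+b) > 0" "b/(a+b) > 0"
    using ab d p by (auto simp: field_simps)
  moreover have "(2*a+b-1)/(a+b) + b/(a+b) < 1"
    by (subst add_divide_distrib[symmetric]) (use ab d p in \<open>simp add: divide_less_eq\<close>)
  ultimately show ?thesis by (simp add: good_def)
qed

lemma step02:
  assumes "good (a,b)" "a+2*b-1 \<le> 0"
  shows "good (a/(1-b), b/(1-b))"
proof -
  have i: "indep a b" and p: "a > 0" "b > 0" "a + b < 1" using assms(1) by (auto simp: good_def)
  have "a+2*b-1 \<noteq> 0" using indep_neq[OF i, of "-1" 1 2] by (auto simp: algebra_simps)
  hence ab: "a+2*b < 1" using assms(2) by simp
  have d: "1 - b > 0" using p by simp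
  have "indep (a/(1-b)) (b/(1-b))"
    by (rule indep_transform[OF i, where fa="\<lambda>q0 q1 q2. q0" and fb="\<lambda>q0 q1 q2. q1" and fc="\<lambda>q0 q1 q2. q2-q0"])
       (use d in \<open>auto simp: algebra_simps rs\<close>)
  moreover have "a/(1-b) > 0" "b/(1-b) > 0"
    using ab d p by (auto simp: field_simps)
  moreover have "a/(1-b) + b/(1-b) < 1"
    by (subst add_divide_distrib[symmetric]) (use ab d p in \<open>simp add: divide_less_eq\<close>)
  ultimately show ?thesis by (simp add: good_def)
qed

lemma step20:
  assumes "good (a,b)" "\<not> a+2*b-1 \<le> 0"
  shows "good (a/(a+b), (a+2*b-1)/(a+b))"
proof -
  have i: "indep a b" and p: "a > 0" "b > 0" "a + b < 1" using assms(1) by (auto simp: good_def)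
  have ab: "a+2*b > 1" using assms(2) by simp
  have d: "a + b > 0" using p by simp
  have "indep (a/(a+b)) ((a+2*b-1)/(a+b))"
    by (rule indep_transform[OF i, where fa="\<lambda>q0 q1 q2. -q2" and fb="\<lambda>q0 q1 q2. q0+q1+q2" and fc="\<lambda>q0 q1 q2. q0+2*q2"])
       (use d in \<open>auto simp: algebra_simps rs\<close>)
  moreover have "a/(a+b) > 0" "(a+2*b-1)/(a+b) > 0"
    using ab d p by (auto simp: field_simps)
  moreover have "a/(a+b) + (a+2*b-1)/(a+b) < 1"
    by (subst add_divide_distrib[symmetric]) (use ab d p in \<open>simp add: divide_less_eq\<close>)
  ultimately show ?thesis by (simp add: good_def)
qed


lemma inner3: "inner (x::real^3) y = x$0 * y$0 + x$1 * y$1 + x$2 * y$2"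
proof -
  have h: "(3::3) = 0" by simp
  show ?thesis unfolding inner_vec_def sum_3 h by (simp add: algebra_simps)
qed

lemma three: "(3::3) = 0" by simp

lemma Linv12: "matrix_inv (Lmat (1,2)) = Ninv (2,1)"
  by (rule inv_unique3) (simp_all add: Lmat_def Mmat_def Ninv_def matrix_matrix_mult_def mat_def vec_eq_iff forall_3 sum_3 three)

lemma Linv21: "matrix_inv (Lmat (2,1)) = Ninv (1,2)"
  by (rule inv_unique3) (simp_all add: Lmat_def Mmat_def Ninv_def matrix_matrix_mult_def mat_def vec_eq_iff forall_3 sum_3 three)

lemma Linv01: "matrix_inv (Lmat (0,1)) = Ninv (1,0)"
  by (rule inv_unique3) (simp_all add: Lmat_def Mmat_def Ninv_def matrix_matrix_mult_def mat_def vec_eq_iff forall_3 sum_3 three)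

lemma Linv10: "matrix_inv (Lmat (1,0)) = Ninv (0,1)"
  by (rule inv_unique3) (simp_all add: Lmat_def Mmat_def Ninv_def matrix_matrix_mult_def mat_def vec_eq_iff forall_3 sum_3 three)

lemma Linv02: "matrix_inv (Lmat (0,2)) = Ninv (2,0)"
  by (rule inv_unique3) (simp_all add: Lmat_def Mmat_def Ninv_def matrix_matrix_mult_def mat_def vec_eq_iff forall_3 sum_3 three)

lemma Linv20: "matrix_inv (Lmat (2,0)) = Ninv (0,2)"
  by (rule inv_unique3) (simp_all add: Lmat_def Mmat_def Ninv_def matrix_matrix_mult_def mat_def vec_eq_iff forall_3 sum_3 three)

lemma Linv:
  assumes "e \<in> {(1,2),(2,1),(0,1),(1,0),(0,2),(2,0)}"
  shows "matrix_inv (Lmat e) = Ninv (snd e, fst e)"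
  using assms Linv12 Linv21 Linv01 Linv10 Linv02 Linv20 by auto

lemma phi_comp:
  assumes "e \<in> {(1,2),(2,1),(0,1),(1,0),(0,2),(2,0)}"
  shows "(matrix_inv (Lmat e) *v x) = (\<chi> k. x$k - (if k = of_nat (snd e) then x $ (of_nat (fst e)) else 0))"
  unfolding Linv[OF assms] using assms
  by (auto simp: Ninv_def vec_eq_iff forall_3 sum_3 matrix_vector_mult_def three)

lemma rhs_gen: "(d::real) \<noteq> 0 \<Longrightarrow> d * (y0 * (1 - u / d - v / d) + y1 * (u / d) + y2 * (v / d)) = y0 * (d - u - v) + y1 * u + y2 * v"
  by (simp add: field_simps)

lemma fin12: assumes "1 - b \<noteq> 0" shows "inner (matrix_inv (Lmat (1,2)) *v x) (nuvec (a,b)) = (1 - b) * inner x (nuvec (Tij (1,2) (a,b)))"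
proof -
  have "inner (matrix_inv (Lmat (1,2)) *v x) (nuvec (a,b)) = x$0 * (1 - a - b) + x$1 * a + x$2 * b - x$1 * b"
    unfolding Linv12 by (simp add: Ninv_def matrix_vector_mult_def inner3 sum_3 three nuvec_def algebra_simps)
  moreover have "(1 - b) * inner x (nuvec (Tij (1,2) (a,b))) = (1 - b) * (x$0*(1 - (a - b)/(1 - b) - (b)/(1 - b)) + x$1*((a - b)/(1 - b)) + x$2*((b)/(1 - b)))"
    by (simp add: inner3 nuvec_def)
  moreover have "\<dots> = x$0*((1 - b)-(a - b)-(b)) + x$1*(a - b) + x$2*(b)"
    by (rule rhs_gen[OF assms])
  moreover have "\<dots> = x$0 * (1 - a - b) + x$1 * a + x$2 * b - x$1 * b" by (simp add: algebra_simps)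
  ultimately show ?thesis by metis
qed

lemma fin21: assumes "1 - a \<noteq> 0" shows "inner (matrix_inv (Lmat (2,1)) *v x) (nuvec (a,b)) = (1 - a) * inner x (nuvec (Tij (2,1) (a,b)))"
proof -
  have "inner (matrix_inv (Lmat (2,1)) *v x) (nuvec (a,b)) = x$0 * (1 - a - b) + x$1 * a + x$2 * b - x$2 * a"
    unfolding Linv21 by (simp add: Ninv_def matrix_vector_mult_def inner3 sum_3 three nuvec_def algebra_simps)
  moreover have "(1 - a) * inner x (nuvec (Tij (2,1) (a,b))) = (1 - a) * (x$0*(1 - (a)/(1 - a) - (b - a)/(1 - a)) + x$1*((a)/(1 - a)) + x$2*((b - a)/(1 - a)))"
    by (simp add: inner3 nuvec_def)
  moreover have "\<dots> = x$0*((1 - a)-(a)-(b - a)) + x$1*(a) + x$2*(b - a)"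
    by (rule rhs_gen[OF assms])
  moreover have "\<dots> = x$0 * (1 - a - b) + x$1 * a + x$2 * b - x$2 * a" by (simp add: algebra_simps)
  ultimately show ?thesis by metis
qed

lemma fin01: assumes "1 - a \<noteq> 0" shows "inner (matrix_inv (Lmat (0,1)) *v x) (nuvec (a,b)) = (1 - a) * inner x (nuvec (Tij (0,1) (a,b)))"
proof -
  have "inner (matrix_inv (Lmat (0,1)) *v x) (nuvec (a,b)) = x$0 * (1 - a - b) + x$1 * a + x$2 * b - x$0 * a"
    unfolding Linv01 by (simp add: Ninv_def matrix_vector_mult_def inner3 sum_3 three nuvec_def algebra_simps)
  moreover have "(1 - a) * inner x (nuvec (Tij (0,1) (a,b))) = (1 - a) * (x$0*(1 - (a)/(1 - a) - (b)/(1 - a)) + x$1*((a)/(1 - a)) + x$2*((b)/(1 - a)))"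
    by (simp add: inner3 nuvec_def)
  moreover have "\<dots> = x$0*((1 - a)-(a)-(b)) + x$1*(a) + x$2*(b)"
    by (rule rhs_gen[OF assms])
  moreover have "\<dots> = x$0 * (1 - a - b) + x$1 * a + x$2 * b - x$0 * a" by (simp add: algebra_simps)
  ultimately show ?thesis by metis
qed

lemma fin10: assumes "a + b \<noteq> 0" shows "inner (matrix_inv (Lmat (1,0)) *v x) (nuvec (a,b)) = (a + b) * inner x (nuvec (Tij (1,0) (a,b)))"
proof -
  have "inner (matrix_inv (Lmat (1,0)) *v x) (nuvec (a,b)) = x$0 * (1 - a - b) + x$1 * a + x$2 * b - x$1 * (1 - a - b)"
    unfolding Linv10 by (simp add: Ninv_def matrix_vector_mult_def inner3 sum_3 three nuvec_def algebra_simps)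
  moreover have "(a + b) * inner x (nuvec (Tij (1,0) (a,b))) = (a + b) * (x$0*(1 - (2 * a + b - 1)/(a + b) - (b)/(a + b)) + x$1*((2 * a + b - 1)/(a + b)) + x$2*((b)/(a + b)))"
    by (simp add: inner3 nuvec_def)
  moreover have "\<dots> = x$0*((a + b)-(2 * a + b - 1)-(b)) + x$1*(2 * a + b - 1) + x$2*(b)"
    by (rule rhs_gen[OF assms])
  moreover have "\<dots> = x$0 * (1 - a - b) + x$1 * a + x$2 * b - x$1 * (1 - a - b)" by (simp add: algebra_simps)
  ultimately show ?thesis by metis
qed

lemma fin02: assumes "1 - b \<noteq> 0" shows "inner (matrix_inv (Lmat (0,2)) *v x) (nuvec (a,b)) = (1 - b) * inner x (nuvec (Tij (0,2) (a,b)))"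
proof -
  have "inner (matrix_inv (Lmat (0,2)) *v x) (nuvec (a,b)) = x$0 * (1 - a - b) + x$1 * a + x$2 * b - x$0 * b"
    unfolding Linv02 by (simp add: Ninv_def matrix_vector_mult_def inner3 sum_3 three nuvec_def algebra_simps)
  moreover have "(1 - b) * inner x (nuvec (Tij (0,2) (a,b))) = (1 - b) * (x$0*(1 - (a)/(1 - b) - (b)/(1 - b)) + x$1*((a)/(1 - b)) + x$2*((b)/(1 - b)))"
    by (simp add: inner3 nuvec_def)
  moreover have "\<dots> = x$0*((1 - b)-(a)-(b)) + x$1*(a) + x$2*(b)"
    by (rule rhs_gen[OF assms])
  moreover have "\<dots> = x$0 * (1 - a - b) + x$1 * a + x$2 * b - x$0 * b" by (simp add: algebra_simps)
  ultimately show ?thesis by metis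
qed

lemma fin20: assumes "a + b \<noteq> 0" shows "inner (matrix_inv (Lmat (2,0)) *v x) (nuvec (a,b)) = (a + b) * inner x (nuvec (Tij (2,0) (a,b)))"
proof -
  have "inner (matrix_inv (Lmat (2,0)) *v x) (nuvec (a,b)) = x$0 * (1 - a - b) + x$1 * a + x$2 * b - x$2 * (1 - a - b)"
    unfolding Linv20 by (simp add: Ninv_def matrix_vector_mult_def inner3 sum_3 three nuvec_def algebra_simps)
  moreover have "(a + b) * inner x (nuvec (Tij (2,0) (a,b))) = (a + b) * (x$0*(1 - (a)/(a + b) - (a + 2 * b - 1)/(a + b)) + x$1*((a)/(a + b)) + x$2*((a + 2 * b - 1)/(a + b)))"
    by (simp add: inner3 nuvec_def)
  moreover have "\<dots> = x$0*((a + b)-(a)-(a + 2 * b - 1)) + x$1*(a) + x$2*(a + 2 * b - 1)"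
    by (rule rhs_gen[OF assms])
  moreover have "\<dots> = x$0 * (1 - a - b) + x$1 * a + x$2 * b - x$2 * (1 - a - b)" by (simp add: algebra_simps)
  ultimately show ?thesis by metis
qed


lemma eps_cases:
  "(eps K r (a,b) = (1,2) \<and> a \<ge> b) \<or> (eps K r (a,b) = (2,1) \<and> \<not> a \<ge> b) \<or>
   (eps K r (a,b) = (0,1) \<and> 2*a+b-1 \<le> 0) \<or> (eps K r (a,b) = (1,0) \<and> \<not> 2*a+b-1 \<le> 0) \<or>
   (eps K r (a,b) = (0,2) \<and> a+2*b-1 \<le> 0) \<or> (eps K r (a,b) = (2,0) \<and> \<not> a+2*b-1 \<le> 0)"
  unfolding eps_def Let_def by auto

lemma Tmap_good:
  assumes "good ab" shows "good (Tmap K r ab)"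
proof -
  obtain a b where ab: "ab = (a,b)" by (cases ab)
  have g: "good (a,b)" using assms ab by simp
  show ?thesis unfolding ab Tmap_def
    using eps_cases[of K r a b] step12[OF g] step21[OF g] step01[OF g] step10[OF g] step02[OF g] step20[OF g]
    by auto
qed

theorem lemma5p3:
  fixes K :: "real set" and p q :: nat and \<alpha> \<beta> :: real and n :: nat and x :: "real^3"
  assumes "real_cubic_field K"
    and "p > 0" and "q > 0" and "coprime p q" and "\<not> 3 dvd p"
    and "(\<alpha>, \<beta>) \<in> Delta_K K"
  defines "r \<equiv> real p / real q"
  defines "ab \<equiv> \<lambda>m. (Tmap K r ^^ m) (\<alpha>, \<beta>)"
  defines "e \<equiv> eps K r (ab n)"
  defines "c \<equiv> (if e \<in> {(1,2),(0,2)} then 1 / (1 - snd (ab n))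
                else if e \<in> {(2,1),(0,1)} then 1 / (1 - fst (ab n))
                else 1 / (fst (ab n) + snd (ab n)))"
  shows "inner (matrix_inv (Lmat e) *v x) (nuvec (ab n))
           = (1 / c) * inner x (nuvec (ab (Suc n)))"
proof -
  have g0: "good (\<alpha>, \<beta>)" using assms(6) by (simp add: Delta_K_def good_def indep_def)
  have gm: "good (ab m)" for m
  proof (induction m)
    case 0 thus ?case using g0 by (simp add: ab_def)
  next
    case (Suc m)
    have "ab (Suc m) = Tmap K r (ab m)" by (simp add: ab_def)
    thus ?case using Tmap_good[OF Suc.IH] by simp
  qed
  obtain a b where abn: "ab n = (a,b)" by (cases "ab n")
  have g: "good (a,b)" using gm[of n] abn by simp
  hence d1: "1 - a \<noteq> 0" and d2: "1 - b \<noteq> 0" and d3: "a + b \<noteq> 0" by (auto simp: good_def)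
  have suc: "ab (Suc n) = Tij e (a,b)" by (simp add: ab_def e_def Tmap_def abn[unfolded ab_def])
  have ee: "e = eps K r (a,b)" using e_def abn by simp
  show ?thesis
    unfolding suc abn c_def
    using eps_cases[of K r a b, folded ee] fin12[OF d2, of x] fin21[OF d1, of x] fin01[OF d1, of x]
      fin10[OF d3, of x] fin02[OF d2, of x] fin20[OF d3, of x] d1 d2 d3 abn
    by auto
qed

end
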